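(* There exists a continuous, differentiable curve $s$ in $\mathbb{R}^2$ of finite length with no cross-over (that is, $t\mapsto s(t)$ is one-to-one) such that, for every $R>0$, $s$ is not $R$-monotone.
   Context: A closed ball is a set $\{x:\|x-a\|\le \rho\}$ with center $a$ and radius $\rho$. For $R>0$, a curve $s$ (considered with its arc-length parametrization) is called $R$-monotone if the inverse image under $s$ of every closed ball of radius at most $R$ is a connected subset of the parameter domain. *)

theory Defs
  imports "HOL-Analysis.Analysis"
begin

definition polygonal_length :: "(real \<Rightarrow> 'a::metric_space) \<Rightarrow> real list \<Rightarrow> real" where
  "polygonal_length s ts = sum_list (map (\<lambda>(x, y). dist (s x) (s y)) (zip ts (tl ts)))"

definition polygon_lengths :: "(real \<Rightarrow> 'a::metric_space) \<Rightarrow> real \<Rightarrow> real \<Rightarrow> real set" where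
  "polygon_lengths s a b =
     {polygonal_length s ts | ts. ts \<noteq> [] \<and> hd ts = a \<and> last ts = b \<and> sorted ts}"

text \<open>Arc length of s restricted to [a,b] (meaningful when rectifiable).\<close>
definition curve_length :: "(real \<Rightarrow> 'a::metric_space) \<Rightarrow> real \<Rightarrow> real \<Rightarrow> real" where
  "curve_length s a b = Sup (polygon_lengths s a b)"

definition rectifiable_on :: "(real \<Rightarrow> 'a::metric_space) \<Rightarrow> real \<Rightarrow> real \<Rightarrow> bool" where
  "rectifiable_on s a b \<longleftrightarrow> bdd_above (polygon_lengths s a b)"

definition arc_length_param :: "(real \<Rightarrow> 'a::metric_space) \<Rightarrow> real \<Rightarrow> bool" where
  "arc_length_param s L \<longleftrightarrow>
     (\<forall>a b. 0 \<le> a \<and> a \<le> b \<and> b \<le> L \<longrightarrow>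
        rectifiable_on s a b \<and> curve_length s a b = b - a)"

definition R_monotone :: "real \<Rightarrow> (real \<Rightarrow> 'a::metric_space) \<Rightarrow> real \<Rightarrow> bool" where
  "R_monotone R s L \<longleftrightarrow>
     (\<forall>c \<rho>. 0 \<le> \<rho> \<and> \<rho> \<le> R \<longrightarrow> connected {t \<in> {0..L}. s t \<in> cball c \<rho>})"

end

theory Submission
  imports Defs
begin


lemma pl_single[simp]: "polygonal_length s [x] = 0"
  by (simp add: polygonal_length_def)

lemma pl_cons: "ts \<noteq> [] \<Longrightarrow> polygonal_length s (x # ts) = dist (s x) (s (hd ts)) + polygonal_length s ts"
  by (cases ts) (simp_all add: polygonal_length_def)

lemma pl_upper:
  assumes lip: "\<And>x y. x \<in> {a..b} \<Longrightarrow> y \<in> {a..b} \<Longrightarrow> x \<le> y \<Longrightarrow> dist (s x) (s y) \<le> y - x"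
  shows "sorted (x # ts) \<Longrightarrow> set (x # ts) \<subseteq> {a..b} \<Longrightarrow> polygonal_length s (x # ts) \<le> last (x # ts) - x"
proof (induction ts arbitrary: x)
  case Nil
  then show ?case by simp
next
  case (Cons y ts)
  have "polygonal_length s (y # ts) \<le> last (y # ts) - y"
    using Cons by auto
  moreover have "dist (s x) (s y) \<le> y - x" using Cons.prems by (intro lip) auto
  ultimately show ?case by (simp add: pl_cons)
qed

lemma pl_upt: "polygonal_length s (map g [0..<Suc n]) = (\<Sum>i<n. dist (s (g i)) (s (g (Suc i))))"
proof (induction n arbitrary: g)
  case 0
  then show ?case by simp
next
  case (Suc n)
  have e: "map g [0..<Suc (Suc n)] = g 0 # map (g \<circ> Suc) [0..<Suc n]"
    by (simp add: map_upt_Suc del: upt_Suc)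
  show ?case
    unfolding e sum.lessThan_Suc_shift
    by (subst pl_cons) (simp_all add: Suc.IH hd_map del: upt_Suc sum.lessThan_Suc)
qed

lemma lip_of_deriv:
  fixes f :: "real \<Rightarrow> 'a::real_normed_vector"
  assumes der: "\<And>t. t \<in> {0..L} \<Longrightarrow> (f has_vector_derivative f' t) (at t within {0..L})"
    and nrm: "\<And>t. t\<in>{0..L} \<Longrightarrow> norm (f' t) = 1"
    and xy: "x \<in> {0..L}" "y \<in> {0..L}" "x \<le> y"
  shows "dist (f x) (f y) \<le> y - x"
proof -
  have sub: "{x..y} \<subseteq> {0..L}" using xy by auto
  have "norm (f y - f x) \<le> 1 * norm (y - x)"
  proof (rule differentiable_bound[where S="{x..y}" and f'="\<lambda>t h. h *\<^sub>R f' t"])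
    fix t assume t: "t \<in> {x..y}"
    show "(f has_derivative (\<lambda>h. h *\<^sub>R f' t)) (at t within {x..y})"
      using der[of t] t sub has_vector_derivative_within_subset[OF _ sub]
      unfolding has_vector_derivative_def by blast
    show "onorm (\<lambda>h. h *\<^sub>R f' t) \<le> 1"
      by (rule onorm_le) (use nrm t sub in auto)
  qed (use xy in auto)
  then show ?thesis using xy by (simp add: dist_norm norm_minus_commute)
qed

lemma lower_of_deriv:
  fixes f :: "real \<Rightarrow> 'a::real_normed_vector"
  assumes der: "\<And>t. t \<in> {0..L} \<Longrightarrow> (f has_vector_derivative f' t) (at t within {0..L})"
    and cont: "continuous_on {0..L} f'"
    and nrm: "\<And>t. t\<in>{0..L} \<Longrightarrow> norm (f' t) = 1"
    and e: "e > 0"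
  shows "\<exists>d>0. \<forall>x y. x \<in> {0..L} \<longrightarrow> y \<in> {0..L} \<longrightarrow> x \<le> y \<longrightarrow> y - x < d \<longrightarrow>
           (1 - e) * (y - x) \<le> dist (f x) (f y)"
proof -
  have "uniformly_continuous_on {0..L} f'"
    by (rule compact_uniformly_continuous[OF cont]) simp
  then obtain d where d: "d > 0" and
    dd: "\<And>x x'. x \<in> {0..L} \<Longrightarrow> x' \<in> {0..L} \<Longrightarrow> dist x' x < d \<Longrightarrow> dist (f' x') (f' x) < e"
    unfolding uniformly_continuous_on_def using e by metis
  show ?thesis
  proof (intro exI[of _ d] conjI allI impI d)
    fix x y assume xy: "x \<in> {0..L}" "y \<in> {0..L}" "x \<le> y" "y - x < d"
    have sub: "{x..y} \<subseteq> {0..L}" using xy by auto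
    have "norm (f y - f x - (y - x) *\<^sub>R f' x) \<le> norm (y - x) * e"
    proof (rule vector_differentiable_bound_linearization[where S="{x..y}"])
      fix t assume t: "t \<in> {x..y}"
      show "(f has_vector_derivative f' t) (at t within {x..y})"
        using der[of t] t sub has_vector_derivative_within_subset[OF _ sub] by blast
      have "dist (f' t) (f' x) < e" using t xy sub by (intro dd) (auto simp: dist_real_def)
      then show "norm (f' t - f' x) \<le> e" by (simp add: dist_norm)
    qed (use xy in \<open>auto simp: closed_segment_eq_real_ivl\<close>)
    moreover have "norm ((y - x) *\<^sub>R f' x) = y - x" using nrm xy by simp
    moreover have "norm ((y - x) *\<^sub>R f' x) \<le> norm (f y - f x) + norm (f y - f x - (y - x) *\<^sub>R f' x)"
      by (metis add.commute diff_diff_eq2 norm_triangle_ineq4 order_trans norm_minus_commute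
          norm_triangle_sub)
    ultimately show "(1 - e) * (y - x) \<le> dist (f x) (f y)"
      using xy by (simp add: dist_norm norm_minus_commute algebra_simps)
  qed
qed

lemma sorted_bounds: "sorted (x # ts) \<Longrightarrow> z \<in> set (x # ts) \<Longrightarrow> x \<le> z \<and> z \<le> last (x # ts)"
proof (induction ts arbitrary: x)
  case Nil then show ?case by simp
next
  case (Cons y ts)
  then show ?case by (cases "z = x") (auto)
qed

lemma arc_len:
  fixes f :: "real \<Rightarrow> 'a::real_normed_vector"
  assumes der: "\<And>t. t \<in> {0..L} \<Longrightarrow> (f has_vector_derivative f' t) (at t within {0..L})"
    and cont: "continuous_on {0..L} f'"
    and nrm: "\<And>t. t\<in>{0..L} \<Longrightarrow> norm (f' t) = 1"
  shows "arc_length_param f L"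
  unfolding arc_length_param_def
proof (intro allI impI)
  fix a b :: real assume ab: "0 \<le> a \<and> a \<le> b \<and> b \<le> L"
  have lip: "\<And>x y. x \<in> {a..b} \<Longrightarrow> y \<in> {a..b} \<Longrightarrow> x \<le> y \<Longrightarrow> dist (f x) (f y) \<le> y - x"
    using ab by (intro lip_of_deriv[OF der nrm]) auto
  have ub: "\<forall>z\<in>polygon_lengths f a b. z \<le> b - a"
  proof
    fix z assume "z \<in> polygon_lengths f a b"
    then obtain ts where z: "z = polygonal_length f ts" and ts: "ts \<noteq> []" "hd ts = a" "last ts = b" "sorted ts"
      unfolding polygon_lengths_def by blast
    obtain x ts' where tsx: "ts = x # ts'" using ts by (cases ts) auto
    have "set (x # ts') \<subseteq> {a..b}"
      using sorted_bounds[of x ts'] ts tsx by auto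
    then show "z \<le> b - a" using pl_upper[of a b f x ts', OF lip] ts tsx z by auto
  qed
  have mem: "polygonal_length f [a, b] \<in> polygon_lengths f a b"
    unfolding polygon_lengths_def using ab by (intro CollectI exI[of _ "[a,b]"]) auto
  have lb: "(1 - e) * (b - a) \<le> y" if e: "e > 0" and y: "\<forall>z\<in>polygon_lengths f a b. z \<le> y" for e y
  proof (cases "a = b")
    case True
    then show ?thesis using y mem by (auto simp: polygonal_length_def)
  next
    case False
    then have ab': "a < b" using ab by auto
    obtain d where d: "d > 0" and dd: "\<And>x y. x \<in> {0..L} \<Longrightarrow> y \<in> {0..L} \<Longrightarrow> x \<le> y \<Longrightarrow> y - x < d \<Longrightarrow>
           (1 - e) * (y - x) \<le> dist (f x) (f y)"
      using lower_of_deriv[OF der cont nrm e] by metis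
    obtain n :: nat where n: "(b - a) / d < real n" using reals_Archimedean2 by blast
    have npos: "n > 0" using n d ab' by (cases n) (auto simp: field_simps)
    define g where "g i = a + real i * (b - a) / real n" for i
    have step: "(b - a) / real n < d" using n d npos ab' by (simp add: field_simps)
    have gin: "g i \<in> {a..b}" if "i \<le> n" for i
    proof -
      have "real i * (b - a) / real n \<le> real n * (b - a) / real n"
        using that ab' by (intro divide_right_mono mult_right_mono) auto
      then show ?thesis using npos ab' that by (auto simp: g_def)
    qed
    have gS: "g (Suc i) - g i = (b - a) / real n" for i
      by (simp add: g_def add_divide_distrib[symmetric] algebra_simps)
    let ?ts = "map g [0..<Suc n]"
    have dpos: "(b - a) / real n \<ge> 0" using ab' by simp
    have tsmem: "polygonal_length f ?ts \<in> polygon_lengths f a b"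
      unfolding polygon_lengths_def
    proof (intro CollectI exI[of _ ?ts] conjI)
      show "sorted ?ts"
        unfolding sorted_map using ab' npos
        by (intro sorted_wrt_mono_rel[OF _ sorted_upt]) (auto simp: g_def divide_right_mono mult_right_mono)
    qed (use npos in \<open>auto simp: g_def last_map hd_map simp del: upt_Suc\<close>)
    have "(\<Sum>i<n. (1 - e) * ((b - a) / real n)) \<le> (\<Sum>i<n. dist (f (g i)) (f (g (Suc i))))"
    proof (rule sum_mono)
      fix i assume i: "i \<in> {..<n}"
      have mono: "g i \<le> g (Suc i)" using gS[of i] dpos by linarith
      have "(1 - e) * (g (Suc i) - g i) \<le> dist (f (g i)) (f (g (Suc i)))"
        using gin[of i] gin[of "Suc i"] i ab step gS[of i] ab' mono
        by (intro dd) auto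
      then show "(1 - e) * ((b - a) / real n) \<le> dist (f (g i)) (f (g (Suc i)))" by (simp add: gS)
    qed
    also have "\<dots> = polygonal_length f ?ts" by (simp add: pl_upt del: upt_Suc)
    also have "\<dots> \<le> y" using y tsmem by blast
    finally show ?thesis using npos by simp
  qed
  have "Sup (polygon_lengths f a b) = b - a"
  proof (rule cSup_eq_non_empty)
    show "polygon_lengths f a b \<noteq> {}" using mem by blast
    show "\<And>x. x \<in> polygon_lengths f a b \<Longrightarrow> x \<le> b - a" using ub by blast
    fix y assume y: "\<And>x. x \<in> polygon_lengths f a b \<Longrightarrow> x \<le> y"
    show "b - a \<le> y"
    proof (rule ccontr)
      assume "\<not> b - a \<le> y"
      then have yl: "y < b - a" by simp
      define e where "e = (b - a - y) / (2 * (b - a))"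
      have bpos: "b - a > 0" 
      proof -
        have "dist (f a) (f b) \<le> y" using y[OF mem] by (simp add: polygonal_length_def)
        then have "0 \<le> y" by (meson order_trans zero_le_dist)
        then show ?thesis using yl by linarith
      qed
      have "e > 0" using yl bpos by (simp add: e_def)
      from lb[OF this] y have "(1 - e) * (b - a) \<le> y" by blast
      moreover have "(1 - e) * (b - a) = (b - a + y) / 2" using bpos by (simp add: e_def field_simps)
      ultimately show False using yl by simp
    qed
  qed
  then show "rectifiable_on f a b \<and> curve_length f a b = b - a"
    unfolding rectifiable_on_def curve_length_def bdd_above_def using ub by blast
qed



lemma sin_shift: "sin (pi * x) = sin (pi * (x - 2 * real k))"
proof -
  have "sin (pi * (x - 2 * real k)) = sin (pi * x - 2 * pi * real k)" by (simp add: algebra_simps)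
  also have "\<dots> = sin (pi * x)"
    using sin_int_2pin[of "int k"] cos_int_2pin[of "int k"] by (simp add: sin_diff)
  finally show ?thesis by simp
qed

lemma sin_half_pos: assumes "1/6 \<le> r" "r \<le> 5/6" shows "1/2 \<le> sin (pi * r)"
proof (cases "r \<le> 1/2")
  case True
  have "sin (pi/6) \<le> sin (pi * r)"
    using assms True by (intro sin_monotone_2pi_le) (auto simp: field_simps)
  then show ?thesis by (simp add: sin_30)
next
  case False
  have "sin (pi/6) \<le> sin (pi * (1 - r))"
    using assms False by (intro sin_monotone_2pi_le) (auto simp: field_simps)
  moreover have "sin (pi * (1 - r)) = sin (pi * r)"
    by (simp add: algebra_simps sin_diff)
  ultimately show ?thesis by (simp add: sin_30)
qed

lemma sin_nonneg01: assumes "0 \<le> r" "r \<le> 1" shows "0 \<le> sin (pi * r)"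
  using assms by (intro sin_ge_zero) auto

lemma sin_half_neg: assumes "-5/6 \<le> r" "r \<le> -1/6" shows "sin (pi * r) \<le> -1/2"
  using sin_half_pos[of "-r"] assms by simp

lemma sin_nonpos01: assumes "-1 \<le> r" "r \<le> 0" shows "sin (pi * r) \<le> 0"
  using sin_nonneg01[of "-r"] assms by simp

lemma key_ineq:
  fixes dx u E H D :: real
  assumes "dx^2 \<le> E^2" "0 \<le> u" "u \<le> E" "H \<le> u" "0 < D" "E^2 < D * H"
  shows "dx^2 + (D - u)^2 < D^2"
proof -
  have "u^2 \<le> E^2" using assms by (intro power_mono) auto
  moreover have "D * H \<le> D * u" using assms by (intro mult_left_mono) auto
  moreover have "dx^2 + (D-u)^2 = dx^2 + u^2 + D^2 - 2*(D*u)" by (simp add: power2_eq_square algebra_simps)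
  ultimately show ?thesis using assms by linarith
qed

lemma bnd1: fixes m :: real assumes "2 \<le> m" shows "1/m - 1/(m+5/6) \<le> 2/m^2"
proof -
  have "1/m - 1/(m+5/6) = (5/6)/(m*(m+5/6))" using assms by (simp add: field_simps)
  also have "\<dots> \<le> (5/6)/(m*m)" using assms by (intro divide_left_mono mult_left_mono mult_pos_pos) auto
  also have "\<dots> \<le> 2/(m*m)" using assms by (intro divide_right_mono) auto
  also have "\<dots> = 2/m^2" by (simp add: power2_eq_square)
  finally show ?thesis .
qed

lemma bnd2: fixes m :: real assumes "2 \<le> m" shows "1/(m-5/6) - 1/m \<le> 2/m^2"
proof -
  have "1/(m-5/6) - 1/m = (5/6)/(m*(m-5/6))" using assms by (simp add: field_simps)
  also have "\<dots> \<le> (5/6)/(m*(m/2))" using assms by (intro divide_left_mono mult_left_mono mult_pos_pos) auto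
  also have "\<dots> = (5/3)/m^2" by (simp add: power2_eq_square field_simps)
  also have "\<dots> \<le> 2/m^2" using assms by (intro divide_right_mono) auto
  finally show ?thesis .
qed

lemma bnd3: fixes m :: real assumes "2 \<le> m" shows "1/(48*m^3) \<le> (1/(m+1/6) - 1/(m+5/6)) * (1/(m+5/6)) / 4"
proof -
  have a: "1/(m+1/6) - 1/(m+5/6) = (2/3)/((m+1/6)*(m+5/6))" using assms by (simp add: field_simps)
  have b: "(2/3)/((2*m)*(2*m)) \<le> (2/3)/((m+1/6)*(m+5/6))" using assms
    by (intro divide_left_mono mult_mono mult_pos_pos) auto
  have c: "1/(2*m) \<le> 1/(m+5/6)" using assms by (intro divide_left_mono) auto
  have "(2/3)/((2*m)*(2*m)) * (1/(2*m)) \<le> (2/3)/((m+1/6)*(m+5/6)) * (1/(m+5/6))"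
    using assms b c by (intro mult_mono) auto
  then have "(2/3)/((2*m)*(2*m)) * (1/(2*m)) / 4 \<le> (2/3)/((m+1/6)*(m+5/6)) * (1/(m+5/6)) / 4"
    by (intro divide_right_mono) auto
  moreover have "(2/3)/((2*m)*(2*m)) * (1/(2*m)) / 4 = 1/(48*m^3)" by (simp add: power3_eq_cube field_simps)
  ultimately show ?thesis unfolding a by simp
qed

lemma bnd4: fixes m :: real assumes "2 \<le> m" shows "1/(48*m^3) \<le> (1/(m-5/6) - 1/(m-1/6)) * (1/(m-1/6)) / 4"
proof -
  have a: "1/(m-5/6) - 1/(m-1/6) = (2/3)/((m-5/6)*(m-1/6))" using assms by (simp add: field_simps)
  have b: "(2/3)/(m*m) \<le> (2/3)/((m-5/6)*(m-1/6))" using assms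
    by (intro divide_left_mono mult_mono mult_pos_pos) auto
  have c: "1/m \<le> 1/(m-1/6)" using assms by (intro divide_left_mono) auto
  have "(2/3)/(m*m) * (1/m) \<le> (2/3)/((m-5/6)*(m-1/6)) * (1/(m-1/6))"
    using assms b c by (intro mult_mono) auto
  moreover have "1/(48*m^3) \<le> (2/3)/(m*m) * (1/m) / 4" using assms by (simp add: power3_eq_cube field_simps)
  ultimately show ?thesis unfolding a by (smt (verit) divide_right_mono)
qed

lemma bnd5: fixes m :: real assumes "2 \<le> m" shows "(2/m^2)^2 < (400/m) * (1/(48*m^3))"
  using assms by (simp add: field_simps power2_eq_square power3_eq_cube)


definition ww :: "real \<Rightarrow> real" where "ww t = t * sin (pi / t) / 2"
definition XX :: "real \<Rightarrow> real" where "XX t = integral {0..t} (\<lambda>u. sqrt (1 - (ww u)^2))"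
definition YY :: "real \<Rightarrow> real" where "YY t = integral {0..t} ww"
definition e1 :: "real^2" where "e1 = vector [1, 0]"
definition e2 :: "real^2" where "e2 = vector [0, 1]"
definition ss :: "real \<Rightarrow> real^2" where "ss t = XX t *\<^sub>R e1 + YY t *\<^sub>R e2"
definition vv :: "real \<Rightarrow> real^2" where "vv t = sqrt (1 - (ww t)^2) *\<^sub>R e1 + ww t *\<^sub>R e2"

lemma ww_bound: "\<bar>ww t\<bar> \<le> \<bar>t\<bar> / 2"
proof -
  have "\<bar>t * sin (pi / t)\<bar> \<le> \<bar>t\<bar> * 1"
    unfolding abs_mult by (intro mult_left_mono) auto
  then show ?thesis by (simp add: ww_def)
qed

lemma ww_cont: "isCont ww x"
proof (cases "x = 0")
  case True
  have "(ww \<longlongrightarrow> 0) (at 0)"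
  proof (rule Lim_null_comparison)
    have "norm (ww t) \<le> \<bar>t\<bar>" for t using ww_bound[of t] by simp
    then show "\<forall>\<^sub>F t in at 0. norm (ww t) \<le> \<bar>t\<bar>" by simp
    show "((\<lambda>t. \<bar>t\<bar>) \<longlongrightarrow> 0) (at (0::real))"
      using tendsto_rabs[OF tendsto_ident_at[of "0::real" UNIV]] by simp
  qed
  then show ?thesis using True by (simp add: isCont_def ww_def)
next
  case False
  then show ?thesis unfolding ww_def[abs_def] by (intro continuous_intros) auto
qed

lemma ww_contOn: "continuous_on S ww"
  using ww_cont by (simp add: continuous_at_imp_continuous_on)

lemma ww_small: "t \<in> {0..1} \<Longrightarrow> \<bar>ww t\<bar> \<le> 1/2"
  using ww_bound[of t] by auto

lemma sq_small: "t \<in> {0..1} \<Longrightarrow> (ww t)^2 \<le> 1/4"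
proof -
  assume t: "t \<in> {0..1}"
  have "(ww t)^2 = \<bar>ww t\<bar>^2" by simp
  also have "\<dots> \<le> (1/2)^2" using ww_small[OF t] by (intro power_mono) auto
  finally show ?thesis by (simp add: power2_eq_square)
qed

lemma cont_sqrt: "continuous_on {0..1} (\<lambda>u. sqrt (1 - (ww u)^2))"
  by (intro continuous_intros ww_contOn)

lemma XX_der: "t \<in> {0..1} \<Longrightarrow> (XX has_real_derivative sqrt (1 - (ww t)^2)) (at t within {0..1})"
  unfolding XX_def[abs_def] has_real_derivative_iff_has_vector_derivative
  by (rule integral_has_vector_derivative[OF cont_sqrt])

lemma YY_der: "t \<in> {0..1} \<Longrightarrow> (YY has_real_derivative ww t) (at t within {0..1})"
  unfolding YY_def[abs_def] has_real_derivative_iff_has_vector_derivative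
  by (rule integral_has_vector_derivative[OF ww_contOn])

lemma ss_der: "t \<in> {0..1} \<Longrightarrow> (ss has_vector_derivative vv t) (at t within {0..1})"
proof -
  assume t: "t \<in> {0..1}"
  have "((\<lambda>t. XX t *\<^sub>R e1 + YY t *\<^sub>R e2) has_vector_derivative
     (XX t *\<^sub>R 0 + sqrt (1 - (ww t)^2) *\<^sub>R e1 + (YY t *\<^sub>R 0 + ww t *\<^sub>R e2))) (at t within {0..1})"
    by (intro has_vector_derivative_add has_vector_derivative_scaleR XX_der YY_der t has_vector_derivative_const)
  then show ?thesis by (simp add: ss_def[abs_def] vv_def)
qed

lemma vsplit: "(vector [a, b] :: real^2) = a *\<^sub>R e1 + b *\<^sub>R e2"
  by (simp add: vec_eq_iff forall_2 e1_def e2_def)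

lemma norm2: "norm (vector [a, b] :: real^2) = sqrt (a^2 + b^2)"
  by (simp add: norm_vec_def L2_set_def UNIV_2 power2_eq_square)

lemma dist2: "dist (vector [a, b] :: real^2) (vector [c, d]) = sqrt ((a-c)^2 + (b-d)^2)"
  by (simp add: dist_vec_def L2_set_def UNIV_2 dist_real_def)

lemma vv_norm: "t \<in> {0..1} \<Longrightarrow> norm (vv t) = 1"
proof -
  assume t: "t \<in> {0..1}"
  have "vv t = vector [sqrt (1 - (ww t)^2), ww t]" by (simp add: vsplit vv_def)
  moreover have "(sqrt (1 - (ww t)^2))^2 = 1 - (ww t)^2" using sq_small[OF t] by simp
  ultimately show ?thesis by (simp add: norm2)
qed

lemma vv_cont: "continuous_on {0..1} vv"
  unfolding vv_def[abs_def] by (intro continuous_intros ww_contOn)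

lemma ss_vec: "ss t = vector [XX t, YY t]"
  by (simp add: vsplit ss_def)

lemma mvt01:
  assumes der: "\<And>t. t \<in> {0..1} \<Longrightarrow> (F has_real_derivative F' t) (at t within {0..1})"
    and ab: "0 \<le> a" "a < b" "b \<le> 1"
  shows "\<exists>z. a < z \<and> z < b \<and> F b - F a = (b - a) * F' z"
proof -
  have "continuous_on {0..1} F"
    using der DERIV_continuous continuous_on_eq_continuous_within by blast
  then have c: "continuous_on {a..b} F" by (rule continuous_on_subset) (use ab in auto)
  have dat: "(F has_real_derivative F' x) (at x)" if "a < x" "x < b" for x
  proof -
    have "x \<in> interior {0..1::real}" using that ab by (simp add: interior_atLeastAtMost_real)
    then have eq: "at x within {0..1} = at x" by (rule at_within_interior)
    have "x \<in> {0..1}" using that ab by simp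
    then have "(F has_real_derivative F' x) (at x within {0..1})" by (rule der)
    then show ?thesis by (simp only: eq)
  qed
  obtain l z where z: "a < z" "z < b" "DERIV F z :> l" "F b - F a = (b - a) * l"
    using MVT[OF ab(2) c] dat real_differentiable_def by meson
  have "l = F' z" using DERIV_unique[OF z(3) dat[OF z(1,2)]] .
  then show ?thesis using z by blast
qed



lemma XX_incr: assumes "0 \<le> x" "x < y" "y \<le> 1" shows "XX x < XX y"
proof -
  obtain z where z: "x < z" "z < y" "XX y - XX x = (y - x) * sqrt (1 - (ww z)^2)"
    using mvt01[OF XX_der assms] by blast
  have "(ww z)^2 \<le> 1/4" using sq_small[of z] z assms by auto
  then have "sqrt (1 - (ww z)^2) > 0" by simp
  then have "0 < (y - x) * sqrt (1 - (ww z)^2)" using z by (intro mult_pos_pos) auto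
  then show ?thesis using z by linarith
qed

lemma XX_lip: assumes "0 \<le> x" "x \<le> y" "y \<le> 1" shows "\<bar>XX y - XX x\<bar> \<le> y - x"
proof (cases "x = y")
  case False
  then have xy: "x < y" using assms by simp
  obtain z where z: "x < z" "z < y" "XX y - XX x = (y - x) * sqrt (1 - (ww z)^2)"
    using mvt01[OF XX_der assms(1) xy assms(3)] by blast
  have "(ww z)^2 \<le> 1/4" using sq_small[of z] z assms by auto
  then have "sqrt (1 - (ww z)^2) \<le> 1" "sqrt (1 - (ww z)^2) \<ge> 0" by simp_all
  then have "(y - x) * sqrt (1 - (ww z)^2) \<le> (y - x) * 1" "(y - x) * sqrt (1 - (ww z)^2) \<ge> 0"
    using xy by (intro mult_left_mono mult_nonneg_nonneg; simp)+
  then show ?thesis using z by simp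
qed simp

lemma YY_lip: assumes "0 \<le> x" "x \<le> y" "y \<le> 1" shows "\<bar>YY y - YY x\<bar> \<le> y - x"
proof (cases "x = y")
  case False
  then have xy: "x < y" using assms by simp
  obtain z where z: "x < z" "z < y" "YY y - YY x = (y - x) * ww z"
    using mvt01[OF YY_der assms(1) xy assms(3)] by blast
  have "\<bar>ww z\<bar> \<le> 1/2" using ww_small[of z] z assms by auto
  moreover have "\<bar>(y - x) * ww z\<bar> = (y - x) * \<bar>ww z\<bar>" using xy by (simp add: abs_mult)
  moreover have "(y - x) * \<bar>ww z\<bar> \<le> (y - x) * 1" using xy \<open>\<bar>ww z\<bar> \<le> 1/2\<close> by (intro mult_left_mono) auto
  ultimately have "\<bar>(y - x) * ww z\<bar> \<le> (y - x) * 1" by simp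
  then show ?thesis using z by simp
qed simp

lemma YY_lower: assumes "0 \<le> x" "x < y" "y \<le> 1" "\<And>t. x < t \<Longrightarrow> t < y \<Longrightarrow> c \<le> ww t"
  shows "(y - x) * c \<le> YY y - YY x"
proof -
  obtain z where z: "x < z" "z < y" "YY y - YY x = (y - x) * ww z"
    using mvt01[OF YY_der assms(1-3)] by blast
  moreover have "(y - x) * c \<le> (y - x) * ww z" using assms(2) assms(4)[OF z(1,2)] by (intro mult_left_mono) auto
  ultimately show ?thesis by simp
qed

lemma YY_upper: assumes "0 \<le> x" "x < y" "y \<le> 1" "\<And>t. x < t \<Longrightarrow> t < y \<Longrightarrow> ww t \<le> c"
  shows "YY y - YY x \<le> (y - x) * c"
proof -
  obtain z where z: "x < z" "z < y" "YY y - YY x = (y - x) * ww z"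
    using mvt01[OF YY_der assms(1-3)] by blast
  moreover have "(y - x) * ww z \<le> (y - x) * c" using assms(2) assms(4)[OF z(1,2)] by (intro mult_left_mono) auto
  ultimately show ?thesis by simp
qed

lemma ww_shift: "t > 0 \<Longrightarrow> ww t = t * sin (pi * (1/t - 2 * real k)) / 2"
  unfolding ww_def sin_shift[of "1/t" k, symmetric] by simp

lemma inv_le: fixes c t :: real assumes "0 < c" "1/c \<le> t" shows "1/t \<le> c"
proof -
  have "0 < 1/c" using assms(1) by simp
  then have t: "0 < t" using assms by linarith
  then show ?thesis using assms by (simp add: divide_le_eq mult.commute)
qed
lemma inv_ge: fixes c t :: real assumes "0 < t" "t \<le> 1/c" "0 < c" shows "c \<le> 1/t"
proof -
  have "t * c \<le> 1" using assms(2,3) by (simp add: le_divide_eq)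
  then show ?thesis using assms(1) by (simp add: le_divide_eq mult.commute)
qed

lemma ww_pos_strong:
  assumes m: "m = 2 * real k" "2 \<le> m" and t: "1/(m+5/6) \<le> t" "t \<le> 1/(m+1/6)"
  shows "1/(m+5/6) / 4 \<le> ww t"
proof -
  have "0 < 1/(m+5/6)" using m by simp
  then have tp: "0 < t" using t by linarith
  have "1/t \<le> m + 5/6" using inv_le[OF _ t(1)] m by simp
  moreover have "m + 1/6 \<le> 1/t" using inv_ge[OF tp t(2)] m by simp
  ultimately have "1/2 \<le> sin (pi * (1/t - 2 * real k))" using m by (intro sin_half_pos) auto
  then have "t * (1/2) \<le> t * sin (pi * (1/t - 2 * real k))" using tp by (intro mult_left_mono) auto
  then have a: "t / 4 \<le> ww t" using ww_shift[OF tp, of k] by linarith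
  have "1/(m+5/6) / 4 \<le> t / 4" using t(1) by (rule divide_right_mono) simp
  then show ?thesis using a by (rule order_trans)
qed

lemma ww_pos_weak:
  assumes m: "m = 2 * real k" "2 \<le> m" and t: "1/(m+1/6) \<le> t" "t \<le> 1/m"
  shows "0 \<le> ww t"
proof -
  have "0 < 1/(m+1/6)" using m by simp
  then have tp: "0 < t" using t by linarith
  have "1/t \<le> m + 1/6" using inv_le[OF _ t(1)] m by simp
  moreover have "m \<le> 1/t" using inv_ge[OF tp t(2)] m by simp
  ultimately have "0 \<le> sin (pi * (1/t - 2 * real k))" using m by (intro sin_nonneg01) auto
  then show ?thesis using ww_shift[OF tp, of k] tp by (metis divide_nonneg_pos mult_nonneg_nonneg less_eq_real_def zero_less_numeral)
qed

lemma ww_neg_weak: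
  assumes m: "m = 2 * real k" "2 \<le> m" and t: "1/m \<le> t" "t \<le> 1/(m-1/6)"
  shows "ww t \<le> 0"
proof -
  have "0 < 1/m" using m by simp
  then have tp: "0 < t" using t by linarith
  have "1/t \<le> m" using inv_le[OF _ t(1)] m by simp
  moreover have "m - 1/6 \<le> 1/t" using inv_ge[OF tp t(2)] m by simp
  ultimately have "sin (pi * (1/t - 2 * real k)) \<le> 0" using m by (intro sin_nonpos01) auto
  then have "t * sin (pi * (1/t - 2 * real k)) \<le> 0" using tp by (intro mult_nonneg_nonpos) auto
  then show ?thesis using ww_shift[OF tp, of k] by linarith
qed

lemma ww_neg_strong:
  assumes m: "m = 2 * real k" "2 \<le> m" and t: "1/(m-1/6) \<le> t" "t \<le> 1/(m-5/6)"
  shows "ww t \<le> - (1/(m-1/6) / 4)"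
proof -
  have "0 < 1/(m-1/6)" using m by simp
  then have tp: "0 < t" using t by linarith
  have "1/t \<le> m - 1/6" using inv_le[OF _ t(1)] m by simp
  moreover have "m - 5/6 \<le> 1/t" using inv_ge[OF tp t(2)] m by simp
  ultimately have "sin (pi * (1/t - 2 * real k)) \<le> -1/2" using m by (intro sin_half_neg) auto
  then have "t * sin (pi * (1/t - 2 * real k)) \<le> t * (-1/2)" using tp by (intro mult_left_mono) auto
  then have a: "ww t \<le> - (t / 4)" using ww_shift[OF tp, of k] by linarith
  have "1/(m-1/6) / 4 \<le> t / 4" using t(1) by (rule divide_right_mono) simp
  then have "- (t / 4) \<le> - (1/(m-1/6) / 4)" by (rule le_imp_neg_le)
  with a show ?thesis by (rule order_trans)
qed

lemma dist_ss: "dist (ss t) (vector [a, b]) = sqrt ((XX t - a)^2 + (YY t - b)^2)"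
  unfolding ss_vec dist2 ..

lemma ball_pt:
  assumes dxE: "\<bar>dx\<bar> \<le> E" and u: "H \<le> u" "u \<le> E" and H: "0 < H" and D: "0 < D" and EDH: "E^2 < D * H"
  shows "sqrt (dx^2 + (D - u)^2) < D"
proof -
  have "\<bar>dx\<bar>^2 \<le> E^2" using dxE by (intro power_mono) auto
  then have "dx^2 \<le> E^2" by simp
  then have "dx^2 + (D - u)^2 < D^2" using u H D EDH by (intro key_ineq[where E=E and H=H]) auto
  then have "sqrt (dx^2 + (D - u)^2) < sqrt (D^2)" by (rule real_sqrt_less_mono)
  then show ?thesis using D by simp
qed

lemma not_mono:
  assumes R: "R > 0" shows "\<not> R_monotone R ss 1"
proof -
  define k :: nat where "k = nat \<lceil>400/R\<rceil> + 1"
  define m where "m = 2 * real k"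
  have k1: "400/R \<le> real k" unfolding k_def by linarith
  have m2: "2 \<le> m" unfolding m_def k_def by simp
  have "400/R \<le> m" using k1 unfolding m_def by linarith
  then have "400 \<le> m * R" using R by (simp add: divide_le_eq)
  then have mR: "400 / m \<le> R" using m2 by (simp add: divide_le_eq mult.commute)
  define p where "p = 1/(m+5/6)"
  define q where "q = 1/(m+1/6)"
  define t1 where "t1 = 1/m"
  define p2 where "p2 = 1/(m-1/6)"
  define q2 where "q2 = 1/(m-5/6)"
  have o1: "0 < p" unfolding p_def using m2 by simp
  have o2: "p < q" unfolding p_def q_def using m2 by (intro divide_strict_left_mono) auto
  have o3: "q < t1" unfolding q_def t1_def using m2 by (intro divide_strict_left_mono) auto
  have o4: "t1 < p2" unfolding p2_def t1_def using m2 by (intro divide_strict_left_mono) auto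
  have o5: "p2 < q2" unfolding p2_def q2_def using m2 by (intro divide_strict_left_mono) auto
  have o6: "q2 \<le> 1" unfolding q2_def using m2 by (simp add: divide_le_eq)
  have mk: "m = 2 * real k" by (rule m_def)
  have r1: "(q - p) * (p / 4) \<le> YY q - YY p"
    by (rule YY_lower) (use m2 o1 o2 o3 o4 o5 o6 ww_pos_strong[OF mk m2] in \<open>auto simp: p_def q_def\<close>)
  have r2: "(t1 - q) * 0 \<le> YY t1 - YY q"
    by (rule YY_lower) (use m2 o1 o2 o3 o4 o5 o6 ww_pos_weak[OF mk m2] in \<open>auto simp: q_def t1_def\<close>)
  have r3: "YY p2 - YY t1 \<le> (p2 - t1) * 0"
    by (rule YY_upper) (use m2 o1 o2 o3 o4 o5 o6 ww_neg_weak[OF mk m2] in \<open>auto simp: p2_def t1_def\<close>)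
  have r4: "YY q2 - YY p2 \<le> (q2 - p2) * (- (p2 / 4))"
    by (rule YY_upper) (use m2 o1 o2 o3 o4 o5 o6 ww_neg_strong[OF mk m2] in \<open>auto simp: p2_def q2_def\<close>)
  define E where "E = 2 / m^2"
  define H where "H = 1 / (48 * m^3)"
  define D where "D = 400 / m"
  have EDH: "E^2 < D * H" unfolding E_def D_def H_def by (rule bnd5[OF m2])
  have Hpos: "0 < H" unfolding H_def using m2 by simp
  have Dpos: "0 < D" unfolding D_def using m2 by simp
  have DR: "D \<le> R" unfolding D_def by (rule mR)
  have d1: "t1 - p \<le> E" unfolding E_def t1_def p_def by (rule bnd1[OF m2])
  have d2: "q2 - t1 \<le> E" unfolding E_def t1_def q2_def by (rule bnd2[OF m2])
  have h1: "H \<le> (q - p) * (p / 4)"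
    using bnd3[OF m2] unfolding H_def p_def q_def by simp
  have h2: "H \<le> (q2 - p2) * (p2 / 4)"
    using bnd4[OF m2] unfolding H_def p2_def q2_def by simp
  define u1 where "u1 = YY t1 - YY p"
  define u2 where "u2 = YY t1 - YY q2"
  have u1l: "H \<le> u1" using r1 r2 h1 unfolding u1_def by linarith
  have u2l: "H \<le> u2" using r3 r4 h2 unfolding u2_def by linarith
  have u1u: "u1 \<le> E" using YY_lip[of p t1] o1 o2 o3 o4 o5 o6 d1 unfolding u1_def by linarith
  have u2u: "u2 \<le> E" using YY_lip[of t1 q2] o1 o2 o3 o4 o5 o6 d2 unfolding u2_def by linarith
  have x1: "\<bar>XX p - XX t1\<bar> \<le> E" using XX_lip[of p t1] o1 o2 o3 o4 o5 o6 d1 by linarith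
  have x2: "\<bar>XX q2 - XX t1\<bar> \<le> E" using XX_lip[of t1 q2] o1 o2 o3 o4 o5 o6 d2 by linarith
  define c where "c = (vector [XX t1, YY t1 - D] :: real^2)"
  have eA: "YY p - (YY t1 - D) = D - u1" unfolding u1_def by simp
  have eC: "YY q2 - (YY t1 - D) = D - u2" unfolding u2_def by simp
  have dA: "dist (ss p) c < D"
    unfolding c_def dist_ss eA by (rule ball_pt[OF x1 u1l u1u Hpos Dpos EDH])
  have dC: "dist (ss q2) c < D"
    unfolding c_def dist_ss eC by (rule ball_pt[OF x2 u2l u2u Hpos Dpos EDH])
  have dB: "dist (ss t1) c = D"
    unfolding c_def dist_ss using Dpos by simp
  define \<rho> where "\<rho> = max (dist (ss p) c) (dist (ss q2) c)"
  have \<rho>R: "\<rho> \<le> R" using dA dC DR unfolding \<rho>_def by simp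
  have \<rho>0: "0 \<le> \<rho>" unfolding \<rho>_def by (metis max.coboundedI1 zero_le_dist)
  let ?S = "{t \<in> {0..1}. ss t \<in> cball c \<rho>}"
  have pS: "p \<in> ?S" using o1 o2 o3 o4 o5 o6 by (auto simp: \<rho>_def dist_commute)
  have qS: "q2 \<in> ?S" using o1 o2 o3 o4 o5 o6 by (auto simp: \<rho>_def dist_commute)
  have tS: "t1 \<notin> ?S" using dA dC dB by (auto simp: \<rho>_def dist_commute)
  have "\<not> connected ?S"
  proof
    assume "connected ?S"
    then have "is_interval ?S" by (simp add: is_interval_connected_1)
    then have "t1 \<in> ?S" using pS qS o2 o3 o4 o5 unfolding is_interval_1 by (meson less_imp_le order_trans)
    then show False using tS by blast
  qed
  then show ?thesis unfolding R_monotone_def using \<rho>R \<rho>0 by blast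
qed


theorem mainTheorem2:
  shows "\<exists>(s :: real \<Rightarrow> real^2) L.
           0 < L \<and>
           arc_length_param s L \<and>
           continuous_on {0..L} s \<and>
           (\<forall>t \<in> {0..L}. s differentiable (at t within {0..L})) \<and>
           inj_on s {0..L} \<and>
           (\<forall>R > 0. \<not> R_monotone R s L)"
proof (intro exI[of _ ss] exI[of _ "1::real"] conjI)
  show "0 < (1::real)" by simp
  show "arc_length_param ss 1" by (rule arc_len[OF ss_der vv_cont vv_norm])
  show "continuous_on {0..1} ss"
    using ss_der has_vector_derivative_continuous continuous_on_eq_continuous_within by blast
  show "\<forall>t\<in>{0..1}. ss differentiable (at t within {0..1})"
    using ss_der differentiableI_vector by blast
  show "inj_on ss {0..1}"
  proof (rule inj_onI)
    fix x y assume x: "x \<in> {0..1::real}" and y: "y \<in> {0..1::real}" and e: "ss x = ss y"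
    have "XX x = XX y" using arg_cong[OF e, of "\<lambda>v. v $ 1"] by (simp add: ss_vec)
    then show "x = y" using XX_incr[of x y] XX_incr[of y x] x y
      by (cases x y rule: linorder_cases) auto
  qed
  show "\<forall>R>0. \<not> R_monotone R ss 1" using not_mono by blast
qed

end
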